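(* Let $X$ be a Banach lattice and let $S$ be a singular functional on $X$. Then $$\|S\|_{X^*}=\sup\left\{\frac{S(f)}{\operatorname{dist}_X(f,X_a)}: f\in X\setminus X_a,\ \|f\|_X=1\right\}.$$
   Context: $X^*$ is the topological dual of $X$. For a Banach lattice $X$, an element $x$ is order continuous if for every sequence $0\le x_n\le|x|$ with $x_n\downarrow0$ one has $\|x_n\|\to0$; $X_a$ is the closed ideal of order continuous elements. A singular functional is an $S\in X^*$ with $S(x)=0$ for all $x\in X_a$. $\operatorname{dist}_X(f,X_a)=\inf\{\|f-g\|_X:g\in X_a\}$. *)

theory Defs
  imports "HOL-Analysis.Analysis"
begin

class banach_lattice = banach + ordered_real_vector + lattice +
  assumes lattice_norm: "sup x (- x) \<le> sup y (- y) \<Longrightarrow> norm x \<le> norm y"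

definition lat_abs :: "'a::banach_lattice \<Rightarrow> 'a" where
  "lat_abs x = sup x (- x)"

definition order_decr_to_zero :: "(nat \<Rightarrow> 'a::banach_lattice) \<Rightarrow> bool" where
  "order_decr_to_zero xs \<longleftrightarrow> decseq xs \<and>
     (\<forall>n. 0 \<le> xs n) \<and> (\<forall>y. (\<forall>n. y \<le> xs n) \<longrightarrow> y \<le> 0)"

definition order_continuous :: "'a::banach_lattice \<Rightarrow> bool" where
  "order_continuous x \<longleftrightarrow>
     (\<forall>xs. (\<forall>n. 0 \<le> xs n \<and> xs n \<le> lat_abs x) \<and> order_decr_to_zero xs
        \<longrightarrow> (\<lambda>n. norm (xs n)) \<longlonglongrightarrow> 0)"

definition oc_part :: "'a::banach_lattice set" where
  "oc_part = {x. order_continuous x}"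

definition singular_functional :: "('a::banach_lattice \<Rightarrow>\<^sub>L real) \<Rightarrow> bool" where
  "singular_functional S \<longleftrightarrow> (\<forall>x\<in>oc_part. blinfun_apply S x = 0)"

end

theory Submission
  imports Defs
begin

lemma zero_oc: "(0::'a::banach_lattice) \<in> oc_part"
proof -
  have "(\<lambda>n. norm (xs n)) \<longlonglongrightarrow> 0"
    if "\<forall>n. 0 \<le> xs n \<and> xs n \<le> lat_abs (0::'a)" for xs :: "nat \<Rightarrow> 'a"
  proof -
    have "\<forall>n. xs n = 0" using that by (auto simp: lat_abs_def intro: order.antisym)
    then show ?thesis by simp
  qed
  then show ?thesis unfolding oc_part_def order_continuous_def by auto
qed

lemma S_le_dist:
  fixes S :: "'a::banach_lattice \<Rightarrow>\<^sub>L real"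
  assumes "singular_functional S"
  shows "blinfun_apply S f \<le> norm S * infdist f oc_part"
proof (cases "norm S = 0")
  case True
  then show ?thesis using norm_blinfun[of S f] by (simp add: infdist_nonneg)
next
  case False
  then have pos: "norm S > 0" by simp
  have key: "blinfun_apply S f / norm S \<le> dist f g" if g: "g \<in> oc_part" for g
  proof -
    have "blinfun_apply S f = blinfun_apply S (f - g)"
      using assms g by (simp add: singular_functional_def blinfun.diff_right)
    also have "\<dots> \<le> norm S * norm (f - g)"
      using norm_blinfun[of S "f - g"] by simp
    finally show ?thesis using pos by (simp add: divide_le_eq dist_norm mult.commute)
  qed
  then have "blinfun_apply S f / norm S \<le> infdist f oc_part"
  proof -
    have ne: "oc_part \<noteq> ({}::'a set)" using zero_oc by auto
    show ?thesis unfolding infdist_notempty[OF ne]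
      by (rule cINF_greatest[OF ne]) (rule key)
  qed
  then show ?thesis using pos by (simp add: divide_le_eq mult.commute)
qed

theorem lemma2p2:
  fixes S :: "'a::banach_lattice \<Rightarrow>\<^sub>L real"
  assumes "singular_functional S"
  shows "norm S =
    (let A = {f. f \<notin> oc_part \<and> norm f = 1} in
     if A = {} then 0
     else Sup ((\<lambda>f. blinfun_apply S f / infdist f oc_part) ` A))"
proof -
  define A where "A = {f::'a. f \<notin> oc_part \<and> norm f = 1}"
  define r where "r = (\<lambda>f. blinfun_apply S f / infdist f oc_part)"
  have rle: "r f \<le> norm S" for f
  proof (cases "infdist f oc_part = 0")
    case True then show ?thesis by (simp add: r_def)
  next
    case False
    then have "infdist f oc_part > 0" using infdist_nonneg[of f oc_part] by simp
    then show ?thesis using S_le_dist[OF assms, of f] by (simp add: r_def divide_le_eq)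
  qed
  have approx: "\<exists>f\<in>A. r f > c" if c: "c < norm S" "0 \<le> c" for c
  proof (rule ccontr)
    assume na: "\<not> (\<exists>f\<in>A. r f > c)"
    have "norm S \<le> c"
    proof (rule norm_blinfun_bound[OF c(2)])
      fix x :: 'a
      show "norm (blinfun_apply S x) \<le> c * norm x"
      proof (cases "x = 0")
        case True then show ?thesis by simp
      next
        case False
        define u where "u = x /\<^sub>R norm x"
        have nu: "norm u = 1" "norm (-u) = 1" using False by (auto simp: u_def)
        have Su: "blinfun_apply S x = norm x * blinfun_apply S u"
          using False by (simp add: u_def blinfun.scaleR_right)
        have bnd: "blinfun_apply S v \<le> c" if "norm v = 1" for v
        proof (rule ccontr)
          assume h: "\<not> blinfun_apply S v \<le> c"
          then have Sv: "blinfun_apply S v > 0" using c by simp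
          then have "v \<notin> oc_part" using assms by (auto simp: singular_functional_def)
          then have vA: "v \<in> A" using that by (simp add: A_def)
          have d0: "infdist v oc_part \<noteq> 0"
            using S_le_dist[OF assms, of v] Sv by auto
          have d1: "infdist v oc_part \<le> 1"
            using infdist_le[OF zero_oc, of v] that by (simp add: dist_norm)
          have dpos: "infdist v oc_part > 0" using d0 infdist_nonneg[of v oc_part] by simp
          have "blinfun_apply S v \<le> r v"
            using Sv dpos d1 by (simp add: r_def le_divide_eq mult_left_le)
          then show False using na vA h by force
        qed
        have "blinfun_apply S u \<le> c" "- blinfun_apply S u \<le> c"
          using bnd[OF nu(1)] bnd[OF nu(2)] by (auto simp: blinfun.minus_right)
        then have "\<bar>blinfun_apply S u\<bar> \<le> c" by simp
        then have "\<bar>blinfun_apply S u\<bar> * norm x \<le> c * norm x" by (rule mult_right_mono) simp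
        then show ?thesis using Su by (simp add: abs_mult mult.commute)
      qed
    qed
    then show False using c by simp
  qed
  show ?thesis
  proof (cases "A = {}")
    case True
    have "norm S \<le> 0"
    proof (rule ccontr)
      assume "\<not> norm S \<le> 0"
      then obtain f where "f \<in> A" using approx[of 0] by auto
      then show False using True by simp
    qed
    then show ?thesis using True by (simp add: A_def[symmetric] Let_def)
  next
    case False
    have bdd: "bdd_above (r ` A)" using rle by (intro bdd_aboveI[of _ "norm S"]) auto
    have "Sup (r ` A) \<le> norm S" using False rle by (auto intro!: cSup_least)
    moreover have "norm S \<le> Sup (r ` A)"
    proof (rule ccontr)
      assume h: "\<not> norm S \<le> Sup (r ` A)"
      obtain f0 where f0: "f0 \<in> A" using False by auto
      show False
      proof (cases "Sup (r ` A) \<ge> 0")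
        case True
        then obtain f where "f \<in> A" "r f > Sup (r ` A)" using approx[of "Sup (r ` A)"] h by auto
        then show False using cSup_upper[OF _ bdd, of "r f"] by auto
      next
        case nn: False
        have "r f0 \<le> Sup (r ` A)" using cSup_upper[OF _ bdd] f0 by auto
        moreover have "r f0 \<ge> 0"
        proof (cases "norm S = 0")
          case True
          then have "blinfun_apply S f0 = 0" using norm_blinfun[of S f0] by simp
          then show ?thesis by (simp add: r_def)
        next
          case False
          then obtain f where "f \<in> A" "r f > 0" using approx[of 0] by auto
          then show ?thesis using cSup_upper[OF _ bdd, of "r f"] nn by auto
        qed
        ultimately show False using nn by simp
      qed
    qed
    ultimately have "Sup (r ` A) = norm S" by simp
    then show ?thesis using False unfolding A_def r_def Let_def by auto
  qed
qed

end
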